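(* Let $p$ be an odd prime and let $x$ be an indeterminate. Then $$\sum_{k=0}^{p-1}\frac{\binom{2k}k^2}{16^k}\big(x^k-(-1)^{\frac{p-1}2}(1-x)^k\big)\equiv\sum_{k=0}^{\frac{p-1}2}\frac{\binom{2k}k^2}{16^k}\big(x^k-(-1)^{\frac{p-1}2}(1-x)^k\big)\equiv 0\pmod{p^2}.$$
   Context: The polynomials involved have rational coefficients whose denominators are prime to $p$; a congruence between such polynomials modulo $p^2$ means that every coefficient of their difference is a rational number whose numerator (in lowest terms) is divisible by $p^2$. *)

theory Defs
  imports "HOL-Computational_Algebra.Polynomial" "HOL-Computational_Algebra.Primes"
begin

definition rat_poly_cong :: "rat poly \<Rightarrow> rat poly \<Rightarrow> int \<Rightarrow> bool" where
  "rat_poly_cong f g m \<longleftrightarrow> (\<forall>i. m dvd fst (quotient_of (coeff (f - g) i)))"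

definition S_poly :: "nat \<Rightarrow> nat \<Rightarrow> rat poly" where
  "S_poly p n = (\<Sum>k=0..n. smult (of_nat ((2*k) choose k) ^ 2 / 16 ^ k)
      ([:0, 1:] ^ k - smult ((-1) ^ ((p - 1) div 2)) ([:1, -1:] ^ k)))"

end

theory Submission
  imports Defs
begin

declare binomial_Suc_Suc[simp del]

lemma h1: "Suc k * (2*Suc k choose Suc k) = 2*(2*k+1) * (2*k choose k)"
proof -
  have e: "2*Suc k = Suc (Suc (2*k))" by simp
  have a: "Suc k * (Suc (Suc (2*k)) choose Suc k) = Suc (Suc (2*k)) * (Suc (2*k) choose k)"
    by (rule Suc_times_binomial)
  have b: "(Suc (2*k) choose k) = (Suc (2*k) choose Suc k)"
    using binomial_symmetric[of k "Suc (2*k)"] by (simp del: binomial_Suc_Suc)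
  have c: "Suc k * (Suc (2*k) choose Suc k) = Suc (2*k) * (2*k choose k)"
    by (rule Suc_times_binomial)
  have "Suc k * (Suc k * (2*Suc k choose Suc k)) = Suc k * (Suc (Suc (2*k)) * (Suc (2*k) choose Suc k))"
    unfolding e a b by (simp only:)
  also have "\<dots> = Suc (Suc (2*k)) * (Suc k * (Suc (2*k) choose Suc k))"
    by (simp only: mult.left_commute)
  also have "\<dots> = Suc (Suc (2*k)) * (Suc (2*k) * (2*k choose k))" by (simp only: c)
  also have "\<dots> = Suc k * (2*(2*k+1) * (2*k choose k))" by (simp del: binomial_Suc_Suc)
  finally show ?thesis by (simp only: mult_left_cancel nat.distinct(1) simp_thms)
qed

lemma h2: "Suc k * (n choose Suc k) = (n-k) * (n choose k)"
proof (cases n)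
  case 0 then show ?thesis by simp
next
  case (Suc m)
  have "(n - k) * (n choose k) = n * (m choose k)" using binomial_absorb_comp[of n k] Suc by (simp del: binomial_Suc_Suc)
  also have "\<dots> = (n choose Suc k) * Suc k" using Suc_times_binomial_eq[of m k] Suc by (simp only:)
  finally show ?thesis by (simp only: mult.commute)
qed

lemma h3: "Suc k * (n + Suc k choose Suc k) = (n+k+1) * (n+k choose k)"
  using Suc_times_binomial[of k "n+k"] by (simp del: binomial_Suc_Suc)
lemma key_cong:
  assumes "prime p" "p = 2*n+1" "k \<le> n"
  shows "(int p)^2 dvd int (2*k choose k)^2 - 16^k * (-1)^k * int (n choose k) * int (n+k choose k)"
  using assms(3)
proof (induction k)
  case 0 then show ?case by simp
next
  case (Suc k)
  define A where "A = int (2*k choose k)^2"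
  define B where "B = 16^k * (-1)^k * int (n choose k) * int (n+k choose k)"
  define A' where "A' = int (2*Suc k choose Suc k)^2"
  define B' where "B' = 16^Suc k * (-1)^Suc k * int (n choose Suc k) * int (n+Suc k choose Suc k)"
  have IH: "(int p)^2 dvd A - B" using Suc A_def B_def by simp
  have e1: "int (Suc k) * int (2*Suc k choose Suc k) = 2*(2*int k+1) * int (2*k choose k)"
    using arg_cong[OF h1[of k], of int] by (simp add: algebra_simps del: binomial_Suc_Suc)
  have e2: "int (Suc k) * int (n choose Suc k) = (int n - int k) * int (n choose k)"
    using arg_cong[OF h2[of k n], of int] Suc.prems by (simp add: of_nat_diff algebra_simps del: binomial_Suc_Suc)
  have e3: "int (Suc k) * int (n + Suc k choose Suc k) = (int n+int k+1) * int (n+k choose k)"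
    using arg_cong[OF h3[of k n], of int] by (simp add: algebra_simps del: binomial_Suc_Suc)
  have fA: "int (Suc k)^2 * A' = 4*(2*int k+1)^2 * A"
  proof -
    have "int (Suc k)^2 * A' = (int (Suc k) * int (2*Suc k choose Suc k))^2"
      unfolding A'_def by (simp only: power_mult_distrib)
    also have "\<dots> = (2*(2*int k+1)*int (2*k choose k))^2" by (simp only: e1)
    also have "\<dots> = 4*(2*int k+1)^2 * A" unfolding A_def by (simp add: power_mult_distrib power2_eq_square algebra_simps)
    finally show ?thesis .
  qed
  have fB: "int (Suc k)^2 * B' = -16*((int n - int k)*(int n+int k+1)) * B"
  proof -
    have "int (Suc k)^2 * B' = 16^Suc k * (-1)^Suc k * ((int (Suc k) * int (n choose Suc k)) * (int (Suc k) * int (n + Suc k choose Suc k)))"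
      unfolding B'_def by (simp add: power2_eq_square algebra_simps)
    also have "\<dots> = -16*((int n - int k)*(int n+int k+1)) * B"
      unfolding e2 e3 B_def by (simp add: algebra_simps)
    finally show ?thesis .
  qed
  have pn: "int p = 2*int n+1" using assms(2) by simp
  have eq: "int (Suc k)^2 * (A' - B') = 4*(2*int k+1)^2 * (A - B) + 4*(int p)^2 * B"
  proof -
    have "int (Suc k)^2 * (A' - B') = int (Suc k)^2 * A' - int (Suc k)^2 * B'"
      by (simp only: right_diff_distrib)
    also have "\<dots> = 4*(2*int k+1)^2 * A - (-16*((int n - int k)*(int n+int k+1)) * B)"
      by (simp only: fA fB)
    also have "\<dots> = 4*(2*int k+1)^2 * (A - B) + 4*(int p)^2 * B"
      unfolding pn by (simp add: algebra_simps power2_eq_square)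
    finally show ?thesis .
  qed
  have d: "(int p)^2 dvd int (Suc k)^2 * (A' - B')"
  proof -
    from IH obtain c where c: "A - B = (int p)^2 * c" by (auto elim: dvdE)
    have "int (Suc k)^2 * (A' - B') = (int p)^2 * (4*(2*int k+1)^2 * c + 4*B)"
      unfolding eq c by (simp add: algebra_simps)
    then show ?thesis by (rule dvdI)
  qed
  have "coprime (int p) (int (Suc k))"
  proof -
    have "Suc k < p" using Suc.prems assms(2) by simp
    then have "\<not> p dvd Suc k" by (simp add: nat_dvd_not_less)
    then have "coprime p (Suc k)" using assms(1) by (simp add: prime_imp_coprime)
    then show ?thesis by (simp only: coprime_int_iff)
  qed
  then have cp: "coprime ((int p)^2) (int (Suc k)^2)" by (simp only: coprime_power_left_iff coprime_power_right_iff simp_thms)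
  have "(int p)^2 dvd A' - B'" using d coprime_dvd_mult_right_iff[OF cp] by (simp only:)
  then show ?case unfolding A'_def B'_def .
qed
lemma coeff_higher_pderiv:
  "coeff ((pderiv ^^ m) f) j = (fact (j+m) / fact j) * coeff (f :: rat poly) (j+m)"
proof (induction m arbitrary: f)
  case 0 then show ?case by simp
next
  case (Suc m)
  have "coeff ((pderiv ^^ Suc m) f) j = coeff ((pderiv ^^ m) (pderiv f)) j"
    by (simp only: funpow_Suc_right comp_def)
  also have "\<dots> = (fact (j+m) / fact j) * (of_nat (Suc (j+m)) * coeff f (Suc (j+m)))"
    by (simp only: Suc.IH coeff_pderiv)
  also have "\<dots> = (fact (j + Suc m) / fact j) * coeff f (j + Suc m)"
    by (simp add: field_simps)
  finally show ?case .
qed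

lemma smult_sum_right: "smult a (sum f A) = (\<Sum>i\<in>A. smult a (f i))"
  by (induction A rule: infinite_finite_induct) (simp_all add: smult_add_right)

lemma pcompose_power_gen: "pcompose (g ^ n) r = (pcompose g r) ^ n"
  by (induction n) (simp_all add: pcompose_mult pcompose_1)

lemma pcompose_higher_pderiv:
  "pcompose ((pderiv ^^ m) f) [:1,-1:] = smult ((-1)^m) ((pderiv ^^ m) (pcompose (f :: rat poly) [:1,-1:]))"
proof (induction m)
  case 0 then show ?case by simp
next
  case (Suc m)
  have dq: "pderiv [:1,-1::rat:] = [:-1:]" by (simp add: pderiv_pCons)
  have "pderiv (pcompose ((pderiv ^^ m) f) [:1,-1:]) = pcompose ((pderiv ^^ Suc m) f) [:1,-1:] * [:-1:]"
    by (simp add: pderiv_pcompose dq)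
  then have "pcompose ((pderiv ^^ Suc m) f) [:1,-1:] = - pderiv (pcompose ((pderiv ^^ m) f) [:1,-1:])"
    by (simp add: mult.commute)
  also have "\<dots> = smult ((-1)^Suc m) ((pderiv ^^ Suc m) (pcompose f [:1,-1:]))"
    unfolding Suc.IH by (simp add: pderiv_smult)
  finally show ?case .
qed

lemma coeff_q_pow: "coeff ([:1,-1::rat:] ^ n) j = (-1)^j * of_nat (n choose j)"
proof (induction n arbitrary: j)
  case 0 then show ?case by (cases j) auto
next
  case (Suc n)
  have e: "[:1,-1::rat:] ^ Suc n = [:1,-1:] ^ n + pCons 0 (- ([:1,-1:] ^ n))"
    by simp
  show ?case
  proof (cases j)
    case 0 then show ?thesis unfolding e by (simp add: Suc.IH)
  next
    case (Suc i)
    then show ?thesis unfolding e by (simp add: Suc.IH binomial_Suc_Suc algebra_simps)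
  qed
qed

definition Rp :: "nat \<Rightarrow> rat poly" where "Rp n = ([:0,1:] * [:1,-1:]) ^ n"

lemma Rp_sym: "pcompose (Rp n) [:1,-1:] = Rp n"
proof -
  have "pcompose ([:0,1:] * [:1,-1::rat:]) [:1,-1:] = [:0,1:] * [:1,-1:]"
    by (simp add: pcompose_pCons)
  then show ?thesis unfolding Rp_def pcompose_power_gen by (simp only:)
qed

lemma coeff_Rp: "coeff (Rp n) (j + n) = (-1)^j * of_nat (n choose j)"
proof -
  have x: "[:0,1::rat:]^n = monom 1 n" by (simp add: monom_altdef)
  have "Rp n = monom 1 n * [:1,-1:] ^ n"
    unfolding Rp_def power_mult_distrib x by (rule refl)
  then show ?thesis by (simp add: coeff_monom_mult coeff_q_pow)
qed

definition Qp :: "nat \<Rightarrow> rat poly" where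
  "Qp n = smult (1 / fact n) ((pderiv ^^ n) (Rp n))"

lemma Qp_sym: "pcompose (Qp n) [:1,-1:] = smult ((-1)^n) (Qp n)"
  unfolding Qp_def pcompose_smult pcompose_higher_pderiv Rp_sym by (simp add: mult.commute)

lemma coeff_Qp: "coeff (Qp n) j = (-1)^j * of_nat (n choose j) * of_nat (n + j choose j)"
proof -
  have "coeff (Qp n) j = (1 / fact n) * ((fact (j+n) / fact j) * ((-1)^j * of_nat (n choose j)))"
    unfolding Qp_def by (simp add: coeff_higher_pderiv coeff_Rp)
  also have "\<dots> = (-1)^j * of_nat (n choose j) * of_nat (n + j choose j)"
    using binomial_fact[of j "n+j", where 'a=rat] by (simp add: field_simps)
  finally show ?thesis .
qed

lemma Qp_sum: "Qp n = (\<Sum>k=0..n. smult ((-1)^k * of_nat (n choose k) * of_nat (n + k choose k)) ([:0,1:]^k))"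
proof (rule poly_eqI)
  fix j
  have x: "[:0,1::rat:]^k = monom 1 k" for k by (simp add: monom_altdef)
  show "coeff (Qp n) j = coeff (\<Sum>k=0..n. smult ((-1)^k * of_nat (n choose k) * of_nat (n + k choose k)) ([:0,1:]^k)) j"
  proof -
    define g :: "nat \<Rightarrow> rat" where "g x = (-1)^x * of_nat (n choose x) * of_nat (n + x choose x)" for x
    have "(\<Sum>x=0..n. g x * (if x = j then 1 else 0)) = (\<Sum>x=0..n. if x = j then g x else 0)"
      by (intro sum.cong refl) simp
    also have "\<dots> = g j" by (simp add: sum.delta' g_def binomial_eq_0)
    finally show ?thesis unfolding coeff_sum x coeff_smult coeff_monom coeff_Qp g_def[symmetric]
      by simp
  qed
qed

lemma pcompose_X_pow: "pcompose ([:0,1::rat:]^k) [:1,-1:] = [:1,-1:]^k"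
  by (induction k) (simp_all add: pcompose_mult pcompose_1 pcompose_pCons)

lemma identity:
  "(\<Sum>k=0..n. smult ((-1)^k * of_nat (n choose k) * of_nat (n + k choose k))
       ([:0,1::rat:]^k - smult ((-1)^n) ([:1,-1:]^k))) = 0"
proof -
  have "pcompose (Qp n) [:1,-1:] = (\<Sum>k=0..n. smult ((-1)^k * of_nat (n choose k) * of_nat (n + k choose k)) ([:1,-1:]^k))"
    by (subst Qp_sum) (simp add: pcompose_sum pcompose_smult pcompose_X_pow)
  then have "(\<Sum>k=0..n. smult ((-1)^k * of_nat (n choose k) * of_nat (n + k choose k)) ([:1,-1:]^k)) = smult ((-1)^n) (Qp n)"
    using Qp_sym by simp
  then have "smult ((-1)^n) (\<Sum>k=0..n. smult ((-1)^k * of_nat (n choose k) * of_nat (n + k choose k)) ([:1,-1:]^k)) = Qp n"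
    by simp
  then have E: "smult ((-1)^n) (\<Sum>k=0..n. smult ((-1)^k * of_nat (n choose k) * of_nat (n + k choose k)) ([:1,-1::rat:]^k)) = (\<Sum>k=0..n. smult ((-1)^k * of_nat (n choose k) * of_nat (n + k choose k)) ([:0,1::rat:]^k))"
    by (simp only: Qp_sum)
  have "(\<Sum>k=0..n. smult ((-1)^k * of_nat (n choose k) * of_nat (n + k choose k))
       ([:0,1::rat:]^k - smult ((-1)^n) ([:1,-1:]^k))) =
     (\<Sum>k=0..n. smult ((-1)^k * of_nat (n choose k) * of_nat (n + k choose k)) ([:0,1:]^k)
        - smult ((-1)^n) (smult ((-1)^k * of_nat (n choose k) * of_nat (n + k choose k)) ([:1,-1:]^k)))"
    by (intro sum.cong refl) (simp add: smult_diff_right ac_simps)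
  also have "\<dots> = 0"
    unfolding sum_subtractf smult_sum_right[symmetric] E by simp
  finally show ?thesis .
qed
definition good :: "int \<Rightarrow> rat \<Rightarrow> bool" where
  "good m r \<longleftrightarrow> (\<exists>a b. b \<noteq> 0 \<and> coprime b m \<and> m dvd a \<and> r = of_int a / of_int b)"

lemma good_0: "good m 0"
  unfolding good_def by (rule exI[of _ 0], rule exI[of _ 1]) simp

lemma good_add: "good m r \<Longrightarrow> good m s \<Longrightarrow> good m (r + s)"
proof -
  assume "good m r" "good m s"
  then obtain a b a' b' where h: "b \<noteq> 0" "coprime b m" "m dvd a" "r = of_int a / of_int b"
    "b' \<noteq> 0" "coprime b' m" "m dvd a'" "s = of_int a' / of_int b'"
    unfolding good_def by blast
  have "r + s = of_int (a*b' + a'*b) / of_int (b*b')"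
    using h by (simp add: field_simps)
  moreover have "coprime (b*b') m" using h by simp
  moreover have "m dvd a*b' + a'*b" using h by simp
  ultimately show ?thesis unfolding good_def using h
    by (intro exI[of _ "a*b' + a'*b"] exI[of _ "b*b'"]) simp
qed

lemma good_sum: "(\<And>k. k \<in> A \<Longrightarrow> good m (f k)) \<Longrightarrow> good m (sum f A)"
  by (induction A rule: infinite_finite_induct) (simp_all add: good_0 good_add)

lemma good_mult_Int: "good m r \<Longrightarrow> z \<in> \<int> \<Longrightarrow> good m (r * z)"
proof -
  assume "good m r" "z \<in> \<int>"
  then obtain a b c where h: "b \<noteq> 0" "coprime b m" "m dvd a" "r = of_int a / of_int b" "z = of_int c"
    unfolding good_def by (auto elim: Ints_cases)
  have "r * z = of_int (a * c) / of_int b" using h by simp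
  then show ?thesis unfolding good_def using h by (intro exI[of _ "a*c"] exI[of _ b]) simp
qed

lemma good_numer: assumes "good m r" shows "m dvd fst (quotient_of r)"
proof -
  obtain a b where h: "b \<noteq> 0" "coprime b m" "m dvd a" "r = of_int a / of_int b"
    using assms unfolding good_def by blast
  obtain a' b' where q: "quotient_of r = (a', b')" by (cases "quotient_of r")
  have b': "b' > 0" using q by (rule quotient_of_denom_pos)
  have "r = of_int a' / of_int b'" using q by (rule quotient_of_div)
  then have "of_int a / of_int b = (of_int a' / of_int b' :: rat)" using h by simp
  then have "of_int a * of_int b' = (of_int a' * of_int b :: rat)"
    using h b' by (simp add: frac_eq_eq)
  then have "a * b' = a' * b" by (metis of_int_eq_iff of_int_mult)
  then have "m dvd a' * b" using h(3) by (metis dvd_mult2)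
  then have "m dvd a'" using h(2) by (metis coprime_commute coprime_dvd_mult_left_iff)
  then show ?thesis using q by simp
qed

definition Tp :: "nat \<Rightarrow> nat \<Rightarrow> rat poly" where
  "Tp n k = [:0, 1:] ^ k - smult ((-1) ^ n) ([:1, -1:] ^ k)"

lemma Tp_Ints: "coeff (Tp n k) i \<in> \<int>"
proof -
  have x: "[:0,1::rat:]^k = monom 1 k" by (simp add: monom_altdef)
  show ?thesis unfolding Tp_def coeff_diff coeff_smult x coeff_q_pow coeff_monom
    by (intro Ints_diff Ints_mult Ints_power Ints_minus Ints_of_nat) simp_all
qed

lemma coprime16: assumes "prime p" "odd p" shows "coprime ((16::int)^k) (int p)"
proof -
  have "coprime (2::int) (int p)" using assms by simp
  then have "coprime ((2::int)^(4*k)) (int p)" by simp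
  then show ?thesis by (simp add: power_mult)
qed

lemma central_dvd:
  assumes "prime p" "p = 2*n+1" "n < k" "k < p"
  shows "p dvd (2*k choose k)"
proof -
  have f: "fact k * fact k * (2*k choose k) = fact (2*k)"
    using binomial_fact_lemma[of k "2*k"] by simp
  have "p dvd fact (2*k)" using assms by (simp add: prime_dvd_fact_iff)
  then have "p dvd fact k * fact k * (2*k choose k)" using f by simp
  moreover have "\<not> p dvd fact k" using assms by (simp add: prime_dvd_fact_iff)
  ultimately show ?thesis using assms(1) by (simp add: prime_dvd_mult_iff)
qed

theorem theorem2p1:
  fixes p :: nat
  assumes "prime p" and "odd p"
  shows "rat_poly_cong (S_poly p (p - 1)) (S_poly p ((p - 1) div 2)) (int p ^ 2)
       \<and> rat_poly_cong (S_poly p ((p - 1) div 2)) 0 (int p ^ 2)"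
proof -
  define n where "n = (p - 1) div 2"
  have p1: "p \<ge> 1" using assms(1) prime_gt_0_nat by (simp add: Suc_leI)
  have pn: "p = 2*n+1" unfolding n_def using assms(2) p1 by presburger
  have pm: "p - 1 = n + n" using pn by simp
  define c :: "nat \<Rightarrow> rat" where "c k = of_nat ((2*k) choose k) ^ 2 / 16 ^ k" for k
  have S: "S_poly p m = (\<Sum>k=0..m. smult (c k) (Tp n k))" for m
    unfolding S_poly_def Tp_def c_def n_def by simp
  have part1: "rat_poly_cong (S_poly p (p - 1)) (S_poly p n) (int p ^ 2)"
    unfolding rat_poly_cong_def
  proof
    fix i
    have "S_poly p (p - 1) - S_poly p n = (\<Sum>k=n+1..n+n. smult (c k) (Tp n k))"
      unfolding pm S using sum.ub_add_nat[of 0 n "\<lambda>k. smult (c k) (Tp n k)" n] by simp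
    then have e: "coeff (S_poly p (p - 1) - S_poly p n) i = (\<Sum>k=n+1..n+n. c k * coeff (Tp n k) i)"
      by (simp add: coeff_sum)
    have "good (int p ^ 2) (\<Sum>k=n+1..n+n. c k * coeff (Tp n k) i)"
    proof (rule good_sum)
      fix k assume k: "k \<in> {n+1..n+n}"
      have "p dvd (2*k choose k)" using central_dvd[OF assms(1) pn] k pn by simp
      then have d: "int p ^ 2 dvd int (2*k choose k) ^ 2" by (simp add: int_dvd_int_iff)
      have "c k = of_int (int (2*k choose k) ^ 2) / of_int (16^k)" unfolding c_def by simp
      then have "good (int p ^ 2) (c k)" unfolding good_def using d coprime16[OF assms, of k]
        by (intro exI[of _ "int (2*k choose k) ^ 2"] exI[of _ "16^k"]) simp
      then show "good (int p ^ 2) (c k * coeff (Tp n k) i)" using Tp_Ints by (rule good_mult_Int)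
    qed
    then show "int p ^ 2 dvd fst (quotient_of (coeff (S_poly p (p - 1) - S_poly p n) i))"
      unfolding e by (rule good_numer)
  qed
  have part2: "rat_poly_cong (S_poly p n) 0 (int p ^ 2)"
    unfolding rat_poly_cong_def
  proof
    fix i
    define d :: "nat \<Rightarrow> rat" where "d k = (-1)^k * of_nat (n choose k) * of_nat (n + k choose k)" for k
    have "coeff (\<Sum>k=0..n. smult (d k) (Tp n k)) i = 0"
      using identity[of n] unfolding d_def Tp_def by simp
    then have z: "(\<Sum>k=0..n. d k * coeff (Tp n k) i) = 0" by (simp add: coeff_sum)
    have "coeff (S_poly p n - 0) i = (\<Sum>k=0..n. c k * coeff (Tp n k) i)"
      unfolding S by (simp add: coeff_sum)
    also have "\<dots> = (\<Sum>k=0..n. c k * coeff (Tp n k) i) - (\<Sum>k=0..n. d k * coeff (Tp n k) i)"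
      using z by simp
    also have "\<dots> = (\<Sum>k=0..n. (c k - d k) * coeff (Tp n k) i)"
      by (simp add: sum_subtractf left_diff_distrib)
    finally have e: "coeff (S_poly p n - 0) i = (\<Sum>k=0..n. (c k - d k) * coeff (Tp n k) i)" .
    have "good (int p ^ 2) (\<Sum>k=0..n. (c k - d k) * coeff (Tp n k) i)"
    proof (rule good_sum)
      fix k assume k: "k \<in> {0..n}"
      define A where "A = int (2*k choose k)^2"
      define B where "B = 16^k * (-1)^k * int (n choose k) * int (n+k choose k)"
      have dv: "int p ^ 2 dvd A - B" unfolding A_def B_def using key_cong[OF assms(1) pn] k by simp
      have "c k - d k = of_int (A - B) / of_int (16^k)"
        unfolding c_def d_def A_def B_def by (simp add: field_simps)
      then have "good (int p ^ 2) (c k - d k)" unfolding good_def using dv coprime16[OF assms, of k]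
        by (intro exI[of _ "A - B"] exI[of _ "16^k"]) simp
      then show "good (int p ^ 2) ((c k - d k) * coeff (Tp n k) i)" using Tp_Ints by (rule good_mult_Int)
    qed
    then show "int p ^ 2 dvd fst (quotient_of (coeff (S_poly p n - 0) i))"
      unfolding e by (rule good_numer)
  qed
  show ?thesis using part1 part2 unfolding n_def by simp
qed

end
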